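(* Let $S=\{1,\dots,k\}$ with $k\ge3$ and $c\in\mathbb{R}_+$. Then $\Phi(B_c)=P_c$, $\Psi(P_c)\subseteq B_c$, $\Phi(\overline B_c)=\overline P_c$, and $\Psi(\overline P_c)\subseteq\overline B_c$.
   Context: $S^\pm=S\times\{\pm1\}$ with $i^\pm=(i,\pm1)$, $S^+=\{i^+:i\in S\}$, $S^-=\{i^-:i\in S\}$; for a vector $x$ and a set $X$, $x(X)=\sum_{u\in X}x(u)$. $\Phi:\mathbb{R}^{S^\pm}\to\mathbb{R}^S$, $\Phi(x)(i)=(x(i^+)-x(i^-))/2$; $\Psi:\mathbb{R}^S\to\mathbb{R}^{S^\pm}$, $\Psi(z)(i^+)=z(i)$, $\Psi(z)(i^-)=-z(i)$. $P_c$ is the set of $z\in\mathbb{R}_+^S$ with $z(S)\le2c$ and $z(t)\le z(S\setminus\{t\})$ for all $t\in S$; $\overline P_c$ is the same with $z(S)=2c$ instead of $z(S)\le 2c$. $B_c$ is the set of $x\in\mathbb{R}^{S^\pm}$ with $x(S^\pm)=0$, $x(S^+)\le 2c$, $x(i^+)+x(S^-\setminus\{i^-\})\le0$ for all $i\in S$, $0\le x(i^+)\le c$ and $-c\le x(i^-)\le 0$ for all $i\in S$; $\overline B_c$ is the set of $x\in B_c$ with additionally $x(S^-)\le -2c$. *)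

theory Defs
  imports "HOL-Analysis.Analysis"
begin

text \<open>Signed copies S^pm = S x {1,-1}, where (i,1) is i^+ and (i,-1) is i^-.
  Vectors in R^S are functions nat => real vanishing outside S; vectors in R^{S^pm}
  are functions nat * int => real vanishing outside S^pm.\<close>

definition Spm :: "nat set \<Rightarrow> (nat \<times> int) set" where
  "Spm S = S \<times> {1, -1}"

definition Splus :: "nat set \<Rightarrow> (nat \<times> int) set" where
  "Splus S = S \<times> {1}"

definition Sminus :: "nat set \<Rightarrow> (nat \<times> int) set" where
  "Sminus S = S \<times> {-1}"

definition vecS :: "nat set \<Rightarrow> (nat \<Rightarrow> real) set" where
  "vecS S = {z. \<forall>i. i \<notin> S \<longrightarrow> z i = 0}"

definition vecSpm :: "nat set \<Rightarrow> (nat \<times> int \<Rightarrow> real) set" where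
  "vecSpm S = {x. \<forall>u. u \<notin> Spm S \<longrightarrow> x u = 0}"

definition Phi :: "nat set \<Rightarrow> (nat \<times> int \<Rightarrow> real) \<Rightarrow> (nat \<Rightarrow> real)" where
  "Phi S x = (\<lambda>i. if i \<in> S then (x (i, 1) - x (i, -1)) / 2 else 0)"

definition Psi :: "nat set \<Rightarrow> (nat \<Rightarrow> real) \<Rightarrow> (nat \<times> int \<Rightarrow> real)" where
  "Psi S z = (\<lambda>(i, s). if i \<in> S \<and> s = 1 then z i
                        else if i \<in> S \<and> s = -1 then - z i else 0)"

definition Pc :: "nat set \<Rightarrow> real \<Rightarrow> (nat \<Rightarrow> real) set" where
  "Pc S c = {z \<in> vecS S. (\<forall>i\<in>S. z i \<ge> 0) \<and> sum z S \<le> 2 * c \<and>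
                        (\<forall>t\<in>S. z t \<le> sum z (S - {t}))}"

definition Pc_bar :: "nat set \<Rightarrow> real \<Rightarrow> (nat \<Rightarrow> real) set" where
  "Pc_bar S c = {z \<in> vecS S. (\<forall>i\<in>S. z i \<ge> 0) \<and> sum z S = 2 * c \<and>
                        (\<forall>t\<in>S. z t \<le> sum z (S - {t}))}"

definition Bc :: "nat set \<Rightarrow> real \<Rightarrow> (nat \<times> int \<Rightarrow> real) set" where
  "Bc S c = {x \<in> vecSpm S. sum x (Spm S) = 0 \<and> sum x (Splus S) \<le> 2 * c \<and>
       (\<forall>i\<in>S. x (i, 1) + sum x (Sminus S - {(i, -1)}) \<le> 0) \<and>
       (\<forall>i\<in>S. 0 \<le> x (i, 1) \<and> x (i, 1) \<le> c) \<and>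
       (\<forall>i\<in>S. - c \<le> x (i, -1) \<and> x (i, -1) \<le> 0)}"

definition Bc_bar :: "nat set \<Rightarrow> real \<Rightarrow> (nat \<times> int \<Rightarrow> real) set" where
  "Bc_bar S c = {x \<in> Bc S c. sum x (Sminus S) \<le> - 2 * c}"

end

theory Submission
  imports Defs
begin

lemma sum_Spm: "finite S \<Longrightarrow> sum x (Spm S) = (\<Sum>i\<in>S. x (i,1)) + (\<Sum>i\<in>S. x (i,-1))"
proof -
  assume f: "finite S"
  have "sum x (Spm S) = (\<Sum>i\<in>S. \<Sum>j\<in>{1,-1}. x (i,j))"
    unfolding Spm_def using sum.cartesian_product[of "\<lambda>i j. x (i,j)" "{1,-1}" S] by simp
  also have "\<dots> = (\<Sum>i\<in>S. x (i,1) + x (i,-1))" by simp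
  finally show ?thesis by (simp add: sum.distrib)
qed

lemma sum_Splus: "sum x (Splus S) = (\<Sum>i\<in>S. x (i,1))"
proof -
  have "Splus S = (\<lambda>i. (i,1)) ` S" unfolding Splus_def by auto
  moreover have "inj_on (\<lambda>i. (i,1::int)) S" by (auto simp: inj_on_def)
  ultimately show ?thesis by (simp add: sum.reindex)
qed

lemma sum_Sminus: "sum x (Sminus S) = (\<Sum>i\<in>S. x (i,-1))"
proof -
  have "Sminus S = (\<lambda>i. (i,-1)) ` S" unfolding Sminus_def by auto
  moreover have "inj_on (\<lambda>i. (i,-1::int)) S" by (auto simp: inj_on_def)
  ultimately show ?thesis by (simp add: sum.reindex)
qed

lemma sum_Sminus_diff: "sum x (Sminus S - {(i,-1)}) = (\<Sum>j\<in>S-{i}. x (j,-1))"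
proof -
  have "Sminus S - {(i,-1)} = Sminus (S - {i})" unfolding Sminus_def by auto
  then show ?thesis by (simp add: sum_Sminus)
qed

lemma sum_remove: "finite S \<Longrightarrow> t \<in> S \<Longrightarrow> sum (f::'a\<Rightarrow>real) (S - {t}) = sum f S - f t"
  by (simp add: sum.remove)
lemma Phi_sub:
  assumes fin: "finite S" and x: "x \<in> Bc S c"
  shows "Phi S x \<in> Pc S c" and "x \<in> Bc_bar S c \<Longrightarrow> Phi S x \<in> Pc_bar S c"
proof -
  let ?p = "\<lambda>i. x (i,1)" and ?m = "\<lambda>i. x (i,-1)"
  have s0: "sum ?p S + sum ?m S = 0" and sp: "sum ?p S \<le> 2*c"
    and cst: "\<And>i. i\<in>S \<Longrightarrow> ?p i + (\<Sum>j\<in>S-{i}. ?m j) \<le> 0"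
    and b1: "\<And>i. i\<in>S \<Longrightarrow> 0 \<le> ?p i" and b2: "\<And>i. i\<in>S \<Longrightarrow> ?m i \<le> 0"
    using x fin unfolding Bc_def by (auto simp: sum_Spm sum_Splus sum_Sminus_diff)
  have PhiS: "\<And>T. T \<subseteq> S \<Longrightarrow> sum (Phi S x) T = (sum ?p T - sum ?m T)/2"
  proof -
    fix T assume "T \<subseteq> S"
    then have "sum (Phi S x) T = (\<Sum>i\<in>T. (?p i - ?m i)/2)"
      by (intro sum.cong) (auto simp: Phi_def)
    then show "sum (Phi S x) T = (sum ?p T - sum ?m T)/2"
      by (simp add: sum_divide_distrib[symmetric] sum_subtractf)
  qed
  have tot: "sum (Phi S x) S = sum ?p S" using PhiS[of S] s0 by simp
  have A: "Phi S x \<in> Pc S c"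
    unfolding Pc_def vecS_def
  proof (intro CollectI conjI ballI allI impI)
    fix i assume i: "i \<in> S" then show "0 \<le> Phi S x i" using b1[OF i] b2[OF i] by (simp add: Phi_def)
  next
    show "sum (Phi S x) S \<le> 2*c" using tot sp by simp
  next
    fix t assume t: "t \<in> S"
    have "sum (Phi S x) (S - {t}) = (sum ?p S - ?p t - (sum ?m S - ?m t))/2"
      using PhiS[of "S-{t}"] fin t by (simp add: sum_remove)
    moreover have "(\<Sum>j\<in>S-{t}. ?m j) = sum ?m S - ?m t" using fin t by (simp add: sum_remove)
    ultimately show "Phi S x t \<le> sum (Phi S x) (S - {t})"
      using cst[OF t] s0 t by (simp add: Phi_def)
  qed (simp add: Phi_def)
  then show "Phi S x \<in> Pc S c" .
  assume "x \<in> Bc_bar S c"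
  then have "sum ?m S \<le> -2*c" unfolding Bc_bar_def by (simp add: sum_Sminus)
  then have "sum (Phi S x) S = 2*c" using tot s0 sp by simp
  then show "Phi S x \<in> Pc_bar S c" using A unfolding Pc_def Pc_bar_def by auto
qed

lemma Psi_sub:
  assumes fin: "finite S" and z: "z \<in> Pc S c"
  shows "Psi S z \<in> Bc S c" and "Phi S (Psi S z) = z"
    and "z \<in> Pc_bar S c \<Longrightarrow> Psi S z \<in> Bc_bar S c"
proof -
  have z0: "\<And>i. i \<notin> S \<Longrightarrow> z i = 0" and nn: "\<And>i. i\<in>S \<Longrightarrow> 0 \<le> z i"
    and zs: "sum z S \<le> 2*c" and tr: "\<And>t. t\<in>S \<Longrightarrow> z t \<le> sum z (S - {t})"
    using z unfolding Pc_def vecS_def by auto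
  have sp: "(\<Sum>i\<in>T. Psi S z (i,1)) = sum z T" if "T \<subseteq> S" for T
    using that by (intro sum.cong) (auto simp: Psi_def)
  have sm: "(\<Sum>i\<in>T. Psi S z (i,-1)) = - sum z T" if "T \<subseteq> S" for T
    using that by (simp add: sum_negf[symmetric], intro sum.cong) (auto simp: Psi_def)
  have le: "z i \<le> c" if "i \<in> S" for i
    using tr[OF that] zs fin that by (simp add: sum_remove)
  show B: "Psi S z \<in> Bc S c"
    unfolding Bc_def vecSpm_def
  proof (intro CollectI conjI ballI allI impI)
    fix u assume "u \<notin> Spm S" then show "Psi S z u = 0"
      by (cases u) (auto simp: Psi_def Spm_def)
  next
    show "sum (Psi S z) (Spm S) = 0" using fin by (simp add: sum_Spm sp sm)
  next
    show "sum (Psi S z) (Splus S) \<le> 2*c" by (simp add: sum_Splus sp zs)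
  next
    fix i assume i: "i \<in> S"
    show "Psi S z (i,1) + sum (Psi S z) (Sminus S - {(i,-1)}) \<le> 0"
      using i tr[OF i] by (simp add: sum_Sminus_diff sm) (simp add: Psi_def)
  qed (auto simp: Psi_def nn le)
  show "Phi S (Psi S z) = z"
    by (rule ext) (auto simp: Phi_def Psi_def z0)
  assume "z \<in> Pc_bar S c"
  then have "sum z S = 2*c" unfolding Pc_bar_def by auto
  then show "Psi S z \<in> Bc_bar S c" using B unfolding Bc_bar_def
    by (simp add: sum_Sminus sm)
qed

theorem lemma4p1:
  fixes k :: nat and c :: real
  assumes "k \<ge> 3" and "c \<ge> 0"
  defines "S \<equiv> {1..k}"
  shows "Phi S ` Bc S c = Pc S c \<and> Psi S ` Pc S c \<subseteq> Bc S c \<and>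
         Phi S ` Bc_bar S c = Pc_bar S c \<and> Psi S ` Pc_bar S c \<subseteq> Bc_bar S c"
proof -
  have fin: "finite S" unfolding S_def by simp
  have pb: "Pc_bar S c \<subseteq> Pc S c" unfolding Pc_def Pc_bar_def by auto
  have bb: "Bc_bar S c \<subseteq> Bc S c" unfolding Bc_bar_def by auto
  have 1: "Phi S ` Bc S c = Pc S c"
  proof
    show "Phi S ` Bc S c \<subseteq> Pc S c" using Phi_sub(1)[OF fin] by auto
    show "Pc S c \<subseteq> Phi S ` Bc S c"
    proof
      fix z assume z: "z \<in> Pc S c"
      then show "z \<in> Phi S ` Bc S c"
        using Psi_sub(1,2)[OF fin z] by (metis image_eqI)
    qed
  qed
  have 3: "Phi S ` Bc_bar S c = Pc_bar S c"
  proof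
    show "Phi S ` Bc_bar S c \<subseteq> Pc_bar S c" using Phi_sub(2)[OF fin] bb by auto
    show "Pc_bar S c \<subseteq> Phi S ` Bc_bar S c"
    proof
      fix z assume z: "z \<in> Pc_bar S c"
      then have z': "z \<in> Pc S c" using pb by auto
      show "z \<in> Phi S ` Bc_bar S c"
        using Psi_sub(2)[OF fin z'] Psi_sub(3)[OF fin z' z] by (metis image_eqI)
    qed
  qed
  have 2: "Psi S ` Pc S c \<subseteq> Bc S c" using Psi_sub(1)[OF fin] by auto
  have 4: "Psi S ` Pc_bar S c \<subseteq> Bc_bar S c" using Psi_sub(3)[OF fin] pb by auto
  show ?thesis using 1 2 3 4 by blast
qed

end
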